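(* Let $i\ge 5$ be an odd integer and let \[B(i)=\begin{cases}\{\tfrac{i+1}{2}+1,\tfrac{i+1}{2}+3,\dots,i\}, & \text{if } (i+1)/2 \text{ is even},\\ \{\tfrac{i+1}{2},\tfrac{i+1}{2}+2,\dots,i\}, & \text{if } (i+1)/2 \text{ is odd}.\end{cases}\] Then $S(i)=\bigcap_{j\in B(i)}T(j)$, and this intersection is a factorization of $S(i)$ into irreducible numerical semigroups (i.e. it cannot be refined).
   Context: $\mathbb{N}$ denotes the non-negative integers. A numerical semigroup is a submonoid of $(\mathbb{N},+)$ with finite complement. A numerical semigroup is irreducible if it cannot be written as the intersection of two numerical semigroups properly containing it. For an odd integer $j\ge 3$, $T(j)=\{0,\tfrac{j+1}{2},\tfrac{j+1}{2}+1,\dots,j-1\}\cup\{n\in\mathbb{Z}:n\ge j+1\}$; each $T(j)$ is an irreducible numerical semigroup. For odd $i\ge5$, $S(i)=\langle 2,i\rangle\cap T(i)$, where $\langle 2,i\rangle=\{2x+iy:x,y\in\mathbb{N}\}$. Given a numerical semigroup $S$ and irreducible numerical semigroups $S_1,\dots,S_n$, the expression $S_1\cap\dots\cap S_n$ is a factorization of $S$ (of length $n$) if $S=S_1\cap\dots\cap S_n$ and $S\neq\bigcap_{j\in J}S_j$ for every nonempty proper subset $J\subsetneq\{1,\dots,n\}$. *)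

theory Defs
  imports Main
begin

definition numerical_semigroup :: "nat set \<Rightarrow> bool" where
  "numerical_semigroup S \<longleftrightarrow> 0 \<in> S \<and> (\<forall>x\<in>S. \<forall>y\<in>S. x + y \<in> S) \<and> finite (UNIV - S)"

definition irreducible_ns :: "nat set \<Rightarrow> bool" where
  "irreducible_ns S \<longleftrightarrow> numerical_semigroup S \<and>
     \<not> (\<exists>S1 S2. numerical_semigroup S1 \<and> numerical_semigroup S2 \<and>
                 S \<subset> S1 \<and> S \<subset> S2 \<and> S = S1 \<inter> S2)"

definition T :: "nat \<Rightarrow> nat set" where
  "T j = {0} \<union> {(j + 1) div 2 ..< j} \<union> {j + 1 ..}"

definition gen2 :: "nat \<Rightarrow> nat set" where
  "gen2 i = {2 * x + i * y | x y. True}"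

definition S :: "nat \<Rightarrow> nat set" where
  "S i = gen2 i \<inter> T i"

definition B :: "nat \<Rightarrow> nat set" where
  "B i = (let h = (i + 1) div 2 in
          if even h then {h + 1 + 2 * k | k. h + 1 + 2 * k \<le> i}
          else {h + 2 * k | k. h + 2 * k \<le> i})"

definition is_factorization :: "nat set \<Rightarrow> ('i \<Rightarrow> nat set) \<Rightarrow> 'i set \<Rightarrow> bool" where
  "is_factorization Sg Ss I \<longleftrightarrow> finite I \<and> I \<noteq> {} \<and> (\<forall>k\<in>I. irreducible_ns (Ss k)) \<and>
     Sg = (\<Inter>k\<in>I. Ss k) \<and>
     (\<forall>J. J \<subseteq> I \<and> J \<noteq> {} \<and> J \<noteq> I \<longrightarrow> Sg \<noteq> (\<Inter>k\<in>J. Ss k))"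

end

theory Submission
  imports Defs
begin

lemma T_mem: "x \<in> T j \<longleftrightarrow> x = 0 \<or> ((j+1) div 2 \<le> x \<and> x < j) \<or> x \<ge> j+1"
  unfolding T_def by auto

lemma T_ns:
  assumes "odd j" "j \<ge> 3"
  shows "numerical_semigroup (T j)"
proof -
  have "UNIV - T j \<subseteq> {..j}" by (auto simp: T_mem)
  hence "finite (UNIV - T j)" using finite_subset by blast
  moreover have "\<forall>x\<in>T j. \<forall>y\<in>T j. x + y \<in> T j"
    using assms by (auto simp: T_mem elim!: oddE)
  ultimately show ?thesis unfolding numerical_semigroup_def by (auto simp: T_mem)
qed

lemma T_sup:
  assumes "odd j" "j \<ge> 3" "numerical_semigroup S'" "T j \<subset> S'"
  shows "j \<in> S'"
proof -
  obtain x where x: "x \<in> S'" "x \<notin> T j" using assms(4) by blast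
  show ?thesis
  proof (cases "x = j")
    case True then show ?thesis using x by simp
  next
    case False
    then have "1 \<le> x" "x < (j+1) div 2" using x by (auto simp: T_mem)
    then have "j - x \<in> T j" using assms(1,2) by (auto simp: T_mem elim!: oddE)
    then have "j - x \<in> S'" using assms(4) by blast
    then have "x + (j - x) \<in> S'" using x(1) assms(3) unfolding numerical_semigroup_def by blast
    moreover have "x + (j - x) = j" using \<open>x < (j+1) div 2\<close> by simp
    ultimately show ?thesis by simp
  qed
qed

lemma T_irr:
  assumes "odd j" "j \<ge> 3"
  shows "irreducible_ns (T j)"
proof -
  have "j \<notin> T j" using assms by (simp add: T_mem)
  then show ?thesis unfolding irreducible_ns_def using T_ns[OF assms] T_sup[OF assms] by blast
qed

lemma gen2_mem:
  assumes "odd i"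
  shows "x \<in> gen2 i \<longleftrightarrow> even x \<or> x \<ge> i"
proof
  assume "x \<in> gen2 i"
  then obtain a b where "x = 2*a + i*b" unfolding gen2_def by blast
  then show "even x \<or> x \<ge> i" by (cases b) auto
next
  assume h: "even x \<or> x \<ge> i"
  show "x \<in> gen2 i"
  proof (cases "even x")
    case True
    then have "x = 2*(x div 2) + i*0" by simp
    then show ?thesis unfolding gen2_def by blast
  next
    case False
    then have "x \<ge> i" "even (x - i)" using h assms by auto
    then have "x = 2*((x-i) div 2) + i*1" by simp
    then show ?thesis unfolding gen2_def by blast
  qed
qed

lemma B_char:
  assumes "odd i"
  shows "B i = {j. odd j \<and> (i+1) div 2 \<le> j \<and> j \<le> i}"
proof -
  define h where "h = (i+1) div 2"
  show ?thesis
  proof (cases "even h")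
    case True
    have "{h + 1 + 2 * k | k. h + 1 + 2 * k \<le> i} = {j. odd j \<and> h \<le> j \<and> j \<le> i}"
    proof (intro set_eqI iffI)
      fix j assume "j \<in> {j. odd j \<and> h \<le> j \<and> j \<le> i}"
      then have "odd j" "h \<le> j" "j \<le> i" by auto
      then have "j \<noteq> h" using True by auto
      then have "h + 1 \<le> j" using \<open>h \<le> j\<close> by linarith
      moreover have "even (j - (h+1))" using True \<open>odd j\<close> by simp
      ultimately obtain k where "j = h + 1 + 2 * k" by (metis evenE le_add_diff_inverse)
      then show "j \<in> {h + 1 + 2 * k | k. h + 1 + 2 * k \<le> i}" using \<open>j \<le> i\<close> by blast
    qed (use True in auto)
    then show ?thesis using True unfolding B_def h_def[symmetric] by (simp add: Let_def)
  next
    case False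
    have "{h + 2 * k | k. h + 2 * k \<le> i} = {j. odd j \<and> h \<le> j \<and> j \<le> i}"
    proof (intro set_eqI iffI)
      fix j assume "j \<in> {j. odd j \<and> h \<le> j \<and> j \<le> i}"
      then have "odd j" "h \<le> j" "j \<le> i" by auto
      then have "even (j - h)" using False by auto
      then obtain k where "j = h + 2 * k" using \<open>h \<le> j\<close> by (metis evenE le_add_diff_inverse)
      then show "j \<in> {h + 2 * k | k. h + 2 * k \<le> i}" using \<open>j \<le> i\<close> by blast
    qed (use False in auto)
    then show ?thesis using False unfolding B_def h_def[symmetric] by (simp add: Let_def)
  qed
qed

lemma S_mem:
  assumes "odd i"
  shows "x \<in> S i \<longleftrightarrow> x = 0 \<or> (even x \<and> (i+1) div 2 \<le> x \<and> x < i) \<or> x \<ge> i+1"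
  using assms unfolding S_def by (auto simp: gen2_mem[OF assms] T_mem)

theorem lemma2p2:
  fixes i :: nat
  assumes "odd i" and "i \<ge> 5"
  shows "S i = (\<Inter>j\<in>B i. T j) \<and> is_factorization (S i) T (B i)"
proof -
  note Bc = B_char[OF assms(1)]
  have iB: "i \<in> B i" using assms by (simp add: Bc)
  have eq: "S i = (\<Inter>j\<in>B i. T j)"
  proof (intro set_eqI iffI)
    fix x assume xS: "x \<in> S i"
    show "x \<in> (\<Inter>j\<in>B i. T j)"
    proof
      fix j assume "j \<in> B i"
      then have j: "odd j" "(i+1) div 2 \<le> j" "j \<le> i" by (auto simp: Bc)
      have jh: "(j+1) div 2 \<le> (i+1) div 2" using j(3) by (intro div_le_mono) simp
      have "x = 0 \<or> (even x \<and> (i+1) div 2 \<le> x \<and> x < i) \<or> x \<ge> i+1"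
        using xS unfolding S_mem[OF assms(1)] .
      then show "x \<in> T j"
      proof (elim disjE)
        assume a: "even x \<and> (i + 1) div 2 \<le> x \<and> x < i"
        then have "x \<noteq> j" using j by auto
        then show ?thesis unfolding T_mem using jh a by linarith
      qed (use j in \<open>auto simp: T_mem\<close>)
    qed
  next
    fix x assume x: "x \<in> (\<Inter>j\<in>B i. T j)"
    then have xi: "x \<in> T i" using iB by blast
    show "x \<in> S i"
    proof (cases "odd x \<and> x < i \<and> (i+1) div 2 \<le> x")
      case True
      then have "x \<in> B i" by (simp add: Bc)
      then have "x \<in> T x" using x by blast
      then show ?thesis using True by (auto simp: T_mem)
    next
      case False
      then show ?thesis using xi unfolding S_mem[OF assms(1)] T_mem by auto
    qed
  qed
  have irr: "\<forall>k\<in>B i. irreducible_ns (T k)"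
  proof
    fix k assume "k \<in> B i"
    then have "odd k" "k \<ge> 3" using assms by (auto simp: Bc)
    then show "irreducible_ns (T k)" by (rule T_irr)
  qed
  have fin: "finite (B i)" by (simp add: Bc)
  have min: "\<forall>J. J \<subseteq> B i \<and> J \<noteq> {} \<and> J \<noteq> B i \<longrightarrow> S i \<noteq> (\<Inter>k\<in>J. T k)"
  proof (intro allI impI)
    fix J assume J: "J \<subseteq> B i \<and> J \<noteq> {} \<and> J \<noteq> B i"
    then obtain j where j: "j \<in> B i" "j \<notin> J" by blast
    have "j \<in> (\<Inter>k\<in>J. T k)"
    proof
      fix k assume "k \<in> J"
      then have "k \<in> B i" "k \<noteq> j" using J j by auto
      then have k: "odd k" "k \<le> i" "k \<noteq> j" by (auto simp: Bc)
      have jj: "odd j" "(i+1) div 2 \<le> j" "j \<le> i" using j(1) by (auto simp: Bc)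
      have "(k+1) div 2 \<le> (i+1) div 2" using k(2) by (intro div_le_mono) simp
      then show "j \<in> T k" unfolding T_mem using k jj by linarith
    qed
    moreover have "j \<notin> S i" using j(1) unfolding S_mem[OF assms(1)] by (auto simp: Bc intro: odd_pos)
    ultimately show "S i \<noteq> (\<Inter>k\<in>J. T k)" by blast
  qed
  show ?thesis using eq irr fin iB min unfolding is_factorization_def by blast
qed

end
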